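(* Let $A$ be an $n\times n$ affinity matrix of a graph with vertex set $V$, let $\mathcal{Q}\subseteq V$ be a constraint set, let $\alpha>0$, and let $I_{\mathcal{Q}}$ be the $n\times n$ diagonal matrix whose diagonal entries equal 1 for vertices in $V\setminus\mathcal{Q}$ and 0 otherwise. Consider the parametrized quadratic program: maximize $f_{\mathcal{Q}}^\alpha(\mathbf{x})=\mathbf{x}^\top(A-\alpha I_{\mathcal{Q}})\mathbf{x}$ subject to $\mathbf{x}\in\Delta=\{\mathbf{x}\in\mathbb{R}^n:\sum_i x_i=1,\ x_i\ge 0\}$. Given a distribution $\mathbf{x}\in\Delta$ with support $\sigma(\mathbf{x})=\{i\in V: x_i>0\}$, if $(A\mathbf{x})_i > \mathbf{x}^\top A\mathbf{x} - \alpha\, \mathbf{x}_{\mathcal{Q}}^\top \mathbf{x}_{\mathcal{Q}}$ for some $i\notin\sigma(\mathbf{x})$, then (1) $\mathbf{x}$ is not the maximizer of this parametrized quadratic program, and (2) the $i$-th unit vector $e_i$ is a dominant distribution for $\mathbf{x}$, where a distribution $\mathbf{y}\in\Delta$ is called a dominant distribution for $\mathbf{x}$ if $\mathbf{y}^\top(A-\alpha I_{\mathcal{Q}})\mathbf{x} > \mathbf{x}^\top(A-\alpha I_{\mathcal{Q}})\mathbf{x}$.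
   Context: Constrained dominant set clustering: local maximizers of the program above (with $\alpha$ larger than the largest eigenvalue of the principal submatrix of $A$ indexed by $V\setminus\mathcal{Q}$) have support intersecting $\mathcal{Q}$. The KKT conditions of the program state that $[(A-\alpha I_{\mathcal{Q}})\mathbf{x}]_i=\lambda/2$ for $i\in\sigma(\mathbf{x})$ and $\le\lambda/2$ for $i\notin\sigma(\mathbf{x})$. The term $\mathbf{x}_{\mathcal{Q}}^\top \mathbf{x}_{\mathcal{Q}}$ is the paper's notation for the quadratic penalty term $\mathbf{x}^\top I_{\mathcal{Q}}\mathbf{x}$. *)

theory Defs
  imports "HOL-Analysis.Analysis"
begin

text \<open>Vertex set V is the finite index type 'n; vectors in R^n are real^'n,
  n x n matrices are real^'n^'n.\<close>

definition affinity_matrix :: "real^'n^'n \<Rightarrow> bool" where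
  "affinity_matrix A \<longleftrightarrow> transpose A = A \<and> (\<forall>i j. 0 \<le> A$i$j) \<and> (\<forall>i. A$i$i = 0)"

definition std_simplex :: "(real^'n) set" where
  "std_simplex = {x. (\<Sum>i\<in>UNIV. x$i) = 1 \<and> (\<forall>i. 0 \<le> x$i)}"

definition support :: "real^'n \<Rightarrow> 'n set" where
  "support x = {i. 0 < x$i}"

definition IQ :: "'n set \<Rightarrow> real^'n^'n" where
  "IQ Q = (\<chi> i j. if i = j \<and> i \<notin> Q then 1 else 0)"

definition fQ :: "real^'n^'n \<Rightarrow> real \<Rightarrow> 'n set \<Rightarrow> real^'n \<Rightarrow> real" where
  "fQ A \<alpha> Q x = x \<bullet> ((A - \<alpha> *\<^sub>R IQ Q) *v x)"

definition is_maximizer :: "real^'n^'n \<Rightarrow> real \<Rightarrow> 'n set \<Rightarrow> real^'n \<Rightarrow> bool" where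
  "is_maximizer A \<alpha> Q x \<longleftrightarrow> x \<in> std_simplex \<and> (\<forall>y\<in>std_simplex. fQ A \<alpha> Q y \<le> fQ A \<alpha> Q x)"

definition dominant_distribution :: "real^'n^'n \<Rightarrow> real \<Rightarrow> 'n set \<Rightarrow> real^'n \<Rightarrow> real^'n \<Rightarrow> bool" where
  "dominant_distribution A \<alpha> Q y x \<longleftrightarrow>
     y \<in> std_simplex \<and> y \<bullet> ((A - \<alpha> *\<^sub>R IQ Q) *v x) > x \<bullet> ((A - \<alpha> *\<^sub>R IQ Q) *v x)"

end

theory Submission
  imports Defs
begin

lemma quad_expand:
  fixes M :: "real^'n^'n"
  assumes sym: "transpose M = M"
  shows "(x + t *\<^sub>R d) \<bullet> (M *v (x + t *\<^sub>R d)) = x \<bullet> (M *v x) + 2 * t * (d \<bullet> (M *v x)) + t^2 * (d \<bullet> (M *v d))"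
proof -
  have s: "x \<bullet> (M *v d) = d \<bullet> (M *v x)"
  proof -
    have "x \<bullet> (M *v d) = (x v* M) \<bullet> d" by (simp add: dot_lmul_matrix)
    also have "x v* M = transpose M *v x" by simp
    also have "\<dots> = M *v x" using sym by simp
    finally show ?thesis by (simp add: inner_commute)
  qed
  have "(x + t *\<^sub>R d) \<bullet> (M *v (x + t *\<^sub>R d)) = x \<bullet> (M *v x) + t * (x \<bullet> (M *v d)) + t * (d \<bullet> (M *v x)) + t*t * (d \<bullet> (M *v d))"
    by (simp add: matrix_vector_right_distrib matrix_vector_mult_scaleR inner_add_left inner_add_right algebra_simps)
  then show ?thesis using s by (simp add: power2_eq_square)
qed

theorem proposition1:
  fixes A :: "real^'n^'n" and Q :: "'n set" and \<alpha> :: real and x :: "real^'n" and i :: 'n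
  assumes "affinity_matrix A"
    and "\<alpha> > 0"
    and "x \<in> std_simplex"
    and "i \<notin> support x"
    and "(A *v x)$i > x \<bullet> (A *v x) - \<alpha> * (x \<bullet> (IQ Q *v x))"
  shows "\<not> is_maximizer A \<alpha> Q x \<and> dominant_distribution A \<alpha> Q (axis i 1) x"
proof -
  define M where "M = A - \<alpha> *\<^sub>R IQ Q"
  define e :: "real^'n" where "e = axis i 1"
  have xi0: "0 \<le> x$i" using assms(3) unfolding std_simplex_def by blast
  have xi1: "\<not> 0 < x$i" using assms(4) unfolding support_def by blast
  have xi: "x$i = 0" using xi0 xi1 by linarith
  have Mx: "M *v x = A *v x - \<alpha> *\<^sub>R (IQ Q *v x)"
    by (simp add: M_def matrix_vector_mult_diff_rdistrib matrix_vector_mult_scaleR scaleR_matrix_vector_assoc)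
  have IQi: "(IQ Q *v x)$i = 0"
    using xi by (auto intro!: sum.neutral simp: IQ_def matrix_vector_mult_def)
  have eM: "e \<bullet> (M *v x) = (A *v x)$i"
    using IQi by (simp add: Mx e_def inner_axis')
  have xM: "x \<bullet> (M *v x) = x \<bullet> (A *v x) - \<alpha> * (x \<bullet> (IQ Q *v x))"
    by (simp add: Mx inner_diff_right)
  have esimp: "e \<in> std_simplex"
    by (simp add: std_simplex_def e_def axis_def)
  have dom: "e \<bullet> (M *v x) > x \<bullet> (M *v x)" using eM xM assms(5) by simp
  have symA: "transpose A = A" using assms(1) by (simp add: affinity_matrix_def)
  have symIQ: "transpose (IQ Q) = IQ Q"
    by (simp add: transpose_def IQ_def vec_eq_iff)
  have Aij: "A$k$j = A$j$k" for j k
    using arg_cong[OF symA, of "\<lambda>M. M$j$k"] by (simp add: transpose_def)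
  have symM: "transpose M = M"
    unfolding M_def vec_eq_iff transpose_def by (auto simp: Aij IQ_def)
  define d where "d = e - x"
  define g where "g = d \<bullet> (M *v x)"
  define c where "c = d \<bullet> (M *v d)"
  have g: "g > 0" using dom by (simp add: g_def d_def inner_diff_left)
  define t where "t = min 1 (g / (\<bar>c\<bar> + 1))"
  have t0: "t > 0" using g by (simp add: t_def)
  have t1: "t \<le> 1" by (simp add: t_def)
  have tc: "t * \<bar>c\<bar> < g"
  proof -
    have "t \<le> g / (\<bar>c\<bar> + 1)" by (simp add: t_def)
    hence "t * (\<bar>c\<bar> + 1) \<le> g" by (simp add: pos_le_divide_eq add_pos_nonneg)
    thus ?thesis using t0 by (simp add: algebra_simps)
  qed
  define y where "y = x + t *\<^sub>R d"
  have fy: "y \<bullet> (M *v y) = x \<bullet> (M *v x) + 2 * t * g + t^2 * c"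
    unfolding y_def g_def c_def by (rule quad_expand[OF symM])
  have tcc: "t * c \<ge> t * (- \<bar>c\<bar>)"
    by (rule mult_left_mono) (use t0 in auto)
  have "t * (t * c) \<ge> t * (t * (- \<bar>c\<bar>))"
    by (rule mult_left_mono[OF tcc]) (use t0 in auto)
  hence "t^2 * c \<ge> - (t * (t * \<bar>c\<bar>))"
    by (simp add: power2_eq_square mult.assoc)
  moreover have "t * (t * \<bar>c\<bar>) < t * g" using t0 tc by simp
  ultimately have gt: "y \<bullet> (M *v y) > x \<bullet> (M *v x)" using fy t0 g
    using mult_pos_pos[OF t0 g] by linarith
  have ysimp: "y \<in> std_simplex"
  proof -
    have yc: "y$j = (1 - t) * x$j + t * e$j" for j by (simp add: y_def d_def algebra_simps)
    have x1: "(\<Sum>j\<in>UNIV. x$j) = 1" "\<forall>j. 0 \<le> x$j" using assms(3) by (auto simp: std_simplex_def)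
    have e1: "(\<Sum>j\<in>UNIV. e$j) = 1" "\<forall>j. 0 \<le> e$j" using esimp by (auto simp: std_simplex_def)
    have "(\<Sum>j\<in>UNIV. y$j) = (1 - t) * (\<Sum>j\<in>UNIV. x$j) + t * (\<Sum>j\<in>UNIV. e$j)"
      by (simp add: yc sum.distrib sum_distrib_left)
    moreover have "\<forall>j. 0 \<le> y$j" using x1(2) e1(2) t0 t1 yc by simp
    ultimately show ?thesis using x1 e1 by (simp add: std_simplex_def)
  qed
  have "\<not> is_maximizer A \<alpha> Q x"
    using ysimp gt by (auto simp: is_maximizer_def fQ_def M_def[symmetric] not_le)
  moreover have "dominant_distribution A \<alpha> Q (axis i 1) x"
    using esimp dom by (simp add: dominant_distribution_def M_def e_def)
  ultimately show ?thesis by blast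
qed

end
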